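(* Let $b>1$ be an integer, let $H$ be a generalized $b$-happy function with digit mean $\mu$ and digit standard deviation $\sigma$, and let $C\subseteq\mathbb{N}$. Assume there is a positive integer $n_1$ satisfying bound (B): (B1) $4\left(1+3\mu+\sqrt{2}\,\sigma\, b^{5n_1/8}\right)\le b^{n_1-1}$, (B2) $\sqrt{3\mu b}\,\sigma\le b^{3n_1/8}$, (B3) $4\mu\left(3\mu+1+b^{3n_1/4}+2\sigma\mu^{-1/2}b^{5n_1/8}\right)\le b^{n_1-1}$, and an $n_1$-strict interval $I_1$ with type-$C$ density $d_1$. Then for every $N\in\mathbb{N}$ there exist an integer $n>N$ and an $n$-strict interval $I$ whose type-$C$ density is at least $$d_1\exp\!\left(-\frac{2}{b^{n_1/4}-1}-\frac{4\sigma}{\sqrt{\mu}\,\left(b^{n_1/8}-1\right)}\right).$$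
   Context: A generalized $b$-happy function: fix an integer $b>1$ and non-negative integers $h(0),\dots,h(b-1)$ with $h(0)=0$, $h(1)=1$; for $n=\sum_{i=0}^k a_ib^i$ in base $b$, $H(n)=\sum_{i=0}^k h(a_i)$. Digit mean $\mu=\frac1b\sum_{j=0}^{b-1}h(j)$, digit variance $\sigma^2=\frac1b\sum_{j=0}^{b-1}(h(j)-\mu)^2$. An integer $n$ is type-$C$ if $H^k(n)\in C$ for some integer $k\ge0$. An integer interval $[a,c]$ is the set of integers $x$ with $a\le x\le c$; $|I|$ is its cardinality. The type-$C$ density of a finite nonempty integer interval $I$ is $|\{n\in I:n\text{ type-}C\}|/|I|$. For a positive integer $m$, an integer interval $I$ is $m$-strict if $I\subseteq[b^{m-1},b^m-1]$ and $|I|=b^{3m/4}$. *)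

theory Defs
  imports Complex_Main
begin

definition gen_happy_digits :: "nat \<Rightarrow> (nat \<Rightarrow> nat) \<Rightarrow> bool" where
  "gen_happy_digits b h \<longleftrightarrow> b > 1 \<and> h 0 = 0 \<and> h 1 = 1"

function happyH :: "nat \<Rightarrow> (nat \<Rightarrow> nat) \<Rightarrow> nat \<Rightarrow> nat" where
  "happyH b h n = (if b \<le> 1 \<or> n = 0 then 0 else h (n mod b) + happyH b h (n div b))"
  by pat_completeness auto
termination by (relation "measure (\<lambda>(b,h,n). n)") auto

declare happyH.simps [simp del]

definition digit_mean :: "nat \<Rightarrow> (nat \<Rightarrow> nat) \<Rightarrow> real" where
  "digit_mean b h = (\<Sum>j<b. real (h j)) / real b"

definition digit_sd :: "nat \<Rightarrow> (nat \<Rightarrow> nat) \<Rightarrow> real" where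
  "digit_sd b h = sqrt ((\<Sum>j<b. (real (h j) - digit_mean b h)^2) / real b)"

definition typeC :: "nat \<Rightarrow> (nat \<Rightarrow> nat) \<Rightarrow> nat set \<Rightarrow> nat \<Rightarrow> bool" where
  "typeC b h C n \<longleftrightarrow> (\<exists>k. (happyH b h ^^ k) n \<in> C)"

definition typeC_density :: "nat \<Rightarrow> (nat \<Rightarrow> nat) \<Rightarrow> nat set \<Rightarrow> nat set \<Rightarrow> real" where
  "typeC_density b h C I = real (card {n \<in> I. typeC b h C n}) / real (card I)"

definition strict_interval :: "nat \<Rightarrow> nat \<Rightarrow> nat set \<Rightarrow> bool" where
  "strict_interval b m I \<longleftrightarrow> (\<exists>a c. I = {a..c}) \<and> I \<subseteq> {b^(m-1)..b^m - 1}
      \<and> real (card I) = real b powr (3 * real m / 4)"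

end

theory Submission
  imports Defs "HOL-Analysis.Harmonic_Numbers"
begin


lemma H_zero: "happyH b h 0 = 0"
  by (simp add: happyH.simps)

lemma H_step:
  assumes "b > 1" "h 0 = 0" "d < b"
  shows "happyH b h (s * b + d) = h d + happyH b h s"
proof (cases "s * b + d = 0")
  case True
  then have "s = 0" "d = 0" using assms by auto
  then show ?thesis using assms H_zero[of b h] by simp
next
  case False
  have "(s * b + d) mod b = d" using assms by simp
  moreover have "(s * b + d) div b = s" using assms by simp
  moreover have "happyH b h (s*b+d) = (if b \<le> 1 \<or> s*b+d=0 then 0 else h ((s*b+d) mod b) + happyH b h ((s*b+d) div b))"
    by (rule happyH.simps)
  ultimately show ?thesis using False assms by (auto simp: H_zero)
qed

lemma H_concat:
  assumes "b > 1" "h 0 = 0" "s < b ^ p"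
  shows "happyH b h (t * b ^ p + s) = happyH b h t + happyH b h s"
  using assms(3)
proof (induction p arbitrary: s)
  case 0
  then show ?case by (simp add: H_zero)
next
  case (Suc p)
  have d: "s mod b < b" using assms by simp
  have sd: "s div b < b ^ p" using Suc.prems assms
    by (simp add: less_mult_imp_div_less mult.commute)
  have e: "t * b ^ Suc p + s = (t * b ^ p + s div b) * b + s mod b"
    by (simp add: algebra_simps)
  have "happyH b h (t * b ^ Suc p + s) = h (s mod b) + happyH b h (t * b ^ p + s div b)"
    unfolding e by (rule H_step[of b h "s mod b" "t * b ^ p + s div b", OF assms(1,2) d])
  also have "\<dots> = h (s mod b) + happyH b h t + happyH b h (s div b)"
    using Suc.IH[OF sd] by simp
  also have "happyH b h s = h (s mod b) + happyH b h (s div b)"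
    using H_step[of b h "s mod b" "s div b", OF assms(1,2) d] by simp
  ultimately show ?case by simp
qed

fun ones :: "nat \<Rightarrow> nat \<Rightarrow> nat" where
  "ones b 0 = 0"
| "ones b (Suc j) = ones b j * b + 1"

lemma H_ones:
  assumes "b > 1" "h 0 = 0" "h 1 = 1"
  shows "happyH b h (ones b j) = j"
proof (induction j)
  case 0 then show ?case by (simp add: H_zero)
next
  case (Suc j)
  have "happyH b h (ones b j * b + 1) = h 1 + happyH b h (ones b j)"
    by (rule H_step) (use assms in auto)
  then show ?case using Suc assms by simp
qed

lemma ones_less:
  assumes "b > 1"
  shows "ones b j < b ^ j"
proof (induction j)
  case 0 then show ?case by simp
next
  case (Suc j)
  have "ones b j + 1 \<le> b ^ j" using Suc by simp
  then have "(ones b j + 1) * b \<le> b ^ j * b" by (rule mult_le_mono1)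
  moreover have "ones b j * b + 1 < (ones b j + 1) * b" using assms by (simp add: algebra_simps)
  ultimately show ?case by (simp add: mult.commute)
qed

lemma sum_split:
  fixes f :: "nat \<Rightarrow> 'a::comm_monoid_add"
  shows "(\<Sum>s<N * b. f s) = (\<Sum>s'<N. \<Sum>d<b. f (s' * b + d))"
proof (induction N)
  case 0 then show ?case by simp
next
  case (Suc N)
  have "{..<Suc N * b} = {..<N * b} \<union> {N*b..<N*b+b}" by auto
  then have "(\<Sum>s<Suc N * b. f s) = (\<Sum>s<N * b. f s) + (\<Sum>s\<in>{N*b..<N*b+b}. f s)"
    by (simp add: sum.union_disjoint ivl_disj_int)
  also have "(\<Sum>s\<in>{N*b..<N*b+b}. f s) = (\<Sum>d<b. f (N * b + d))"
    using sum.shift_bounds_nat_ivl[of f 0 "N*b" b] by (simp add: lessThan_atLeast0 add.commute)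
  finally show ?case using Suc by simp
qed

lemma digit_facts:
  assumes "b > 1" "h 0 = 0" "h 1 = 1"
  shows "digit_mean b h * real b \<ge> 1"
    and "digit_mean b h > 0"
    and "(\<Sum>d<b. real (h d) - digit_mean b h) = 0"
    and "(\<Sum>d<b. (real (h d) - digit_mean b h)^2) = real b * (digit_sd b h)^2"
    and "digit_sd b h > 0"
proof -
  let ?\<mu> = "digit_mean b h"
  have bpos: "real b > 0" using assms by simp
  have S: "(\<Sum>j<b. real (h j)) = ?\<mu> * real b"
    unfolding digit_mean_def using bpos by simp
  have "(\<Sum>j<b. real (h j)) \<ge> (\<Sum>j\<in>{1}. real (h j))"
    by (rule sum_mono2) (use assms in auto)
  then show 1: "?\<mu> * real b \<ge> 1" using S assms by simp
  show "?\<mu> > 0"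
  proof (rule ccontr)
    assume "\<not> ?\<mu> > 0"
    then have "?\<mu> * real b \<le> 0" using bpos by (simp add: mult_nonpos_nonneg)
    then show False using 1 by simp
  qed
  show "(\<Sum>d<b. real (h d) - ?\<mu>) = 0"
    using S by (simp add: sum_subtractf)
  have v: "(\<Sum>j<b. (real (h j) - ?\<mu>)^2) \<ge> 0" by (simp add: sum_nonneg)
  show "(\<Sum>d<b. (real (h d) - ?\<mu>)^2) = real b * (digit_sd b h)^2"
    unfolding digit_sd_def using v bpos by simp
  have "(\<Sum>j\<in>{0,1}. (real (h j) - ?\<mu>)^2) \<le> (\<Sum>j<b. (real (h j) - ?\<mu>)^2)"
    by (rule sum_mono2) (use assms in auto)
  moreover have "(\<Sum>j\<in>{0,1}. (real (h j) - ?\<mu>)^2) = ?\<mu>^2 + (1 - ?\<mu>)^2"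
    using assms by simp
  moreover have "?\<mu>^2 + (1 - ?\<mu>)^2 > 0" by (cases "?\<mu> = 0") (auto intro: add_pos_nonneg)
  ultimately have "(\<Sum>j<b. (real (h j) - ?\<mu>)^2) > 0" by linarith
  then have "(\<Sum>j<b. (real (h j) - ?\<mu>)^2) / real b > 0" using bpos by simp
  then show "digit_sd b h > 0" unfolding digit_sd_def by simp
qed

lemma moment2:
  assumes "b > 1" "h 0 = 0" "h 1 = 1"
  shows "(\<Sum>s<b^k. (real (happyH b h s) - real k * digit_mean b h)^2)
          = real b ^ k * real k * (digit_sd b h)^2"
proof (induction k)
  case 0
  then show ?case by (simp add: H_zero)
next
  case (Suc k)
  let ?\<mu> = "digit_mean b h" and ?\<sigma> = "digit_sd b h"
  note F = digit_facts[OF assms]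
  have "(\<Sum>s<b^Suc k. (real (happyH b h s) - real (Suc k) * ?\<mu>)^2)
      = (\<Sum>s'<b^k. \<Sum>d<b. (real (happyH b h (s' * b + d)) - real (Suc k) * ?\<mu>)^2)"
    using sum_split[of "\<lambda>s. (real (happyH b h s) - real (Suc k) * ?\<mu>)^2" "b^k" b]
    by (simp add: mult.commute)
  also have "\<dots> = (\<Sum>s'<b^k. \<Sum>d<b. ((real (h d) - ?\<mu>) + (real (happyH b h s') - real k * ?\<mu>))^2)"
  proof (intro sum.cong refl)
    fix s' d assume "d \<in> {..<b}"
    then have e: "happyH b h (s' * b + d) = h d + happyH b h s'"
      by (intro H_step) (use assms in auto)
    show "(real (happyH b h (s' * b + d)) - real (Suc k) * ?\<mu>)^2
        = ((real (h d) - ?\<mu>) + (real (happyH b h s') - real k * ?\<mu>))^2"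
      unfolding e by (simp add: algebra_simps)
  qed
  also have "\<dots> = (\<Sum>s'<b^k. (\<Sum>d<b. (real (h d) - ?\<mu>)^2)
        + 2 * (real (happyH b h s') - real k * ?\<mu>) * (\<Sum>d<b. real (h d) - ?\<mu>)
        + real b * (real (happyH b h s') - real k * ?\<mu>)^2)"
  proof (intro sum.cong refl)
    fix s' 
    define X where "X = real (happyH b h s') - real k * ?\<mu>"
    have "(\<Sum>d<b. ((real (h d) - ?\<mu>) + X)^2) = (\<Sum>d<b. (real (h d) - ?\<mu>)^2 + (2 * X) * (real (h d) - ?\<mu>) + X^2)"
      by (intro sum.cong refl) (simp add: power2_eq_square algebra_simps)
    also have "\<dots> = (\<Sum>d<b. (real (h d) - ?\<mu>)^2) + (2 * X) * (\<Sum>d<b. real (h d) - ?\<mu>) + real b * X^2"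
      by (simp add: sum.distrib sum_distrib_left)
    finally show "(\<Sum>d<b. ((real (h d) - ?\<mu>) + (real (happyH b h s') - real k * ?\<mu>))^2)
      = (\<Sum>d<b. (real (h d) - ?\<mu>)^2)
        + 2 * (real (happyH b h s') - real k * ?\<mu>) * (\<Sum>d<b. real (h d) - ?\<mu>)
        + real b * (real (happyH b h s') - real k * ?\<mu>)^2" unfolding X_def .
  qed
  also have "\<dots> = (\<Sum>s'<b^k. real b * ?\<sigma>^2 + real b * (real (happyH b h s') - real k * ?\<mu>)^2)"
    using F by simp
  also have "\<dots> = real b^k * (real b * ?\<sigma>^2) + real b * (real b ^ k * real k * ?\<sigma>^2)"
    by (simp add: sum.distrib sum_distrib_left[symmetric] Suc)
  also have "\<dots> = real b ^ Suc k * real (Suc k) * ?\<sigma>^2" by (simp add: algebra_simps)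
  finally show ?case .
qed

lemma typeC_H:
  assumes "typeC b h C (happyH b h x)"
  shows "typeC b h C x"
proof -
  obtain k where "(happyH b h ^^ k) (happyH b h x) \<in> C" using assms unfolding typeC_def by blast
  then have "(happyH b h ^^ Suc k) x \<in> C" by (simp add: funpow_Suc_right del: funpow.simps)
  then show ?thesis unfolding typeC_def by blast
qed

lemma t_props:
  assumes "b > 1" "h 0 = 0" "h 1 = 1" "j \<le> R" "R + e + 1 \<le> q"
  defines "t \<equiv> (b^(q-1-R) + ones b e) * b^R + ones b j"
  shows "happyH b h t = 1 + e + j" and "b^(q-1) \<le> t" and "t + 1 \<le> b^q"
proof -
  have oj: "ones b j < b^R"
    using ones_less[OF assms(1), of j] power_increasing[of j R b] assms by linarith
  have "b^e \<le> b^(q-1-R)" using power_increasing[of e "q-1-R" b] assms by simp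
  then have oe: "ones b e < b^(q-1-R)"
    using ones_less[OF assms(1), of e] by linarith
  have H1: "happyH b h 1 = 1"
    using H_step[of b h 1 0] assms by (simp add: H_zero)
  have "happyH b h (1 * b^(q-1-R) + ones b e) = happyH b h 1 + happyH b h (ones b e)"
    by (rule H_concat) (use assms oe in auto)
  then have HP: "happyH b h (b^(q-1-R) + ones b e) = 1 + e"
    using H1 H_ones[OF assms(1-3)] by simp
  have "happyH b h t = happyH b h (b^(q-1-R) + ones b e) + happyH b h (ones b j)"
    unfolding t_def by (rule H_concat) (use assms oj in auto)
  then show "happyH b h t = 1 + e + j" using HP H_ones[OF assms(1-3)] by simp
  have qq: "q - 1 - R + R = q - 1" using assms by simp
  have pq: "b^(q-1-R) * b^R = b^(q-1)" by (metis power_add qq)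
  have "b^(q-1) = b^(q-1-R) * b^R" using pq by simp
  then show "b^(q-1) \<le> t" unfolding t_def by (simp add: add_mult_distrib trans_le_add1)
  have "ones b e + 1 \<le> b^e" using ones_less[OF assms(1), of e] by simp
  also have "\<dots> \<le> b^(q-1-R)" using power_increasing[of e "q-1-R" b] assms by simp
  finally have A: "b^(q-1-R) + ones b e + 1 \<le> 2 * b^(q-1-R)" by simp
  have "t + 1 \<le> (b^(q-1-R) + ones b e) * b^R + b^R" unfolding t_def using oj by simp
  also have "\<dots> = (b^(q-1-R) + ones b e + 1) * b^R" by (simp add: algebra_simps)
  also have "\<dots> \<le> 2 * b^(q-1-R) * b^R" using A by (intro mult_le_mono1)
  also have "\<dots> = 2 * b^(q-1)" using pq by simp
  also have "\<dots> \<le> b * b^(q-1)" using assms by simp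
  also have "\<dots> = b^q" using assms by (simp add: power_Suc[symmetric] del: power_Suc)
  finally show "t + 1 \<le> b^q" .
qed



lemma one_minus_ge_exp:
  fixes x :: real assumes "0 \<le> x" "x \<le> 1/2"
  shows "exp (- 2 * x) \<le> 1 - x"
proof -
  have e: "exp (2 * x) \<ge> 1 + 2 * x" using exp_ge_add_one_self[of "2*x"] by simp
  have "x * (1 - 2 * x) \<ge> 0" using assms by (intro mult_nonneg_nonneg) auto
  then have A: "(1 - x) * (1 + 2 * x) \<ge> 1" by (simp add: algebra_simps)
  have "(1 - x) * (1 + 2 * x) \<le> (1 - x) * exp (2 * x)" using e assms by (intro mult_left_mono) auto
  then have "(1 - x) * exp (2 * x) \<ge> 1" using A by linarith
  then show ?thesis by (simp add: exp_minus field_simps)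
qed

lemma inv_one_plus_ge_exp:
  fixes x :: real assumes "0 \<le> x"
  shows "exp (- x) \<le> 1 / (1 + x)"
proof -
  have "exp x \<ge> 1 + x" by (rule exp_ge_add_one_self)
  then show ?thesis using assms by (simp add: exp_minus field_simps)
qed

lemma step:
  fixes b m :: nat and h :: "nat \<Rightarrow> nat" and C J :: "nat set" and \<mu> \<sigma> :: real
  assumes b1: "b > 1" and h0: "h 0 = 0" and h1: "h 1 = 1" and m0: "m > 0"
    and mu: "\<mu> = digit_mean b h" and sg: "\<sigma> = digit_sd b h"
    and B1: "4 * (1 + 3 * \<mu> + sqrt 2 * \<sigma> * real b powr (5 * real m / 8)) \<le> real b ^ (m - 1)"
    and B3: "4 * \<mu> * (3 * \<mu> + 1 + real b powr (3 * real m / 4)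
                 + 2 * \<sigma> * (1 / sqrt \<mu>) * real b powr (5 * real m / 8)) \<le> real b ^ (m - 1)"
    and J: "strict_interval b m J"
  shows "\<exists>m' I. 2 * m \<le> m' \<and> strict_interval b m' I \<and>
     typeC_density b h C I \<ge> typeC_density b h C J *
        exp (- 2 * real b powr (- real m / 4) - 2 * (\<sigma> / sqrt \<mu>) * real b powr (- real m / 8))"
proof -
  note F = digit_facts[OF b1 h0 h1]
  have mupos: "\<mu> > 0" and mub: "\<mu> * real b \<ge> 1" and sgpos: "\<sigma> > 0" using F mu sg by auto
  have bpos: "real b > 1" using b1 by simp
  obtain a c where Jac: "J = {a..c}" using J unfolding strict_interval_def by blast
  define L where "L = card J"
  have Lr: "real L = real b powr (3 * real m / 4)" using J unfolding strict_interval_def L_def by blast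
  have "real L > 0" using Lr bpos by simp
  then have Lpos: "L > 0" by simp
  have cardJ: "L = c + 1 - a" using Jac L_def by simp
  then have ac: "a \<le> c" using Lpos by simp
  have sub: "J \<subseteq> {b^(m-1)..b^m - 1}" using J unfolding strict_interval_def by blast
  have alow: "b^(m-1) \<le> a" and chigh: "c \<le> b^m - 1" using sub Jac ac by auto
  have bm: "b^m \<ge> 1" using b1 by simp
  have cL: "c = a + L - 1" and aL: "a + L \<le> b^m" using cardJ ac chigh bm by auto
  define B where "B = real b ^ (m-1)"
  have aB: "B \<le> real a" using alow unfolding B_def by (metis of_nat_le_iff of_nat_power)
  have aL': "real a + real L \<le> real b ^ m" using aL by (metis of_nat_add of_nat_le_iff of_nat_power)
  have Bb: "B * real b = real b ^ m" unfolding B_def using m0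
    by (metis Suc_diff_1 power_Suc2)
  have Bpos: "B > 0" unfolding B_def using bpos by simp
  have pm: "real b powr real m = real b ^ m" using bpos by (simp add: powr_realpow)
  have p58: "real b powr (5 * real m / 8) = real b powr (real m / 8) * sqrt (real b ^ m)"
  proof -
    have "real b powr (5 * real m / 8) = real b powr (real m / 8) * real b powr (real m / 2)"
      by (simp add: powr_add[symmetric])
    also have "real b powr (real m / 2) = sqrt (real b ^ m)"
      using powr_half_sqrt_powr[of "real b" "real m"] pm bpos by simp
    finally show ?thesis .
  qed
  define s where "s = \<sigma> * real b powr (real m / 8) / sqrt \<mu>"
  define lam where "lam = s * sqrt (real a)"
  define lam0 where "lam0 = \<sigma> * real b powr (5 * real m / 8) / sqrt \<mu>"
  define lamB where "lamB = s * sqrt B"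
  have spos: "s > 0" unfolding s_def using sgpos mupos bpos by simp
  have lam0B: "lam0 = lamB * sqrt (real b)"
    unfolding lam0_def lamB_def s_def p58 using Bb
    by (metis (no_types, lifting) mult.assoc real_sqrt_mult times_divide_eq_left)
  have "real a \<le> real b ^ m" using aL' by linarith
  then have "sqrt (real a) \<le> sqrt (real b ^ m)" by (rule real_sqrt_le_mono)
  moreover have "lam0 = s * sqrt (real b ^ m)" unfolding lam0_def s_def p58 by simp
  ultimately have lamle: "lam \<le> lam0" unfolding lam_def using spos by (simp add: mult_left_mono)
  have lamBpos: "lamB \<ge> 0" unfolding lamB_def using spos Bpos by simp
  have sb1: "sqrt (real b) \<ge> 1" using bpos by simp
  have Qge: "lam0 \<ge> lamB" unfolding lam0B using lamBpos sb1 by (simp add: mult_le_cancel_left1)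
  have P_eq: "sqrt 2 * \<sigma> * real b powr (5 * real m / 8) = sqrt (2 * \<mu> * real b) * lamB"
  proof -
    have "sqrt 2 * \<sigma> * real b powr (5 * real m / 8) = sqrt 2 * sqrt \<mu> * lam0"
      unfolding lam0_def using mupos by simp
    also have "\<dots> = sqrt (2 * \<mu> * real b) * lamB" unfolding lam0B by (simp add: real_sqrt_mult)
    finally show ?thesis .
  qed
  have "sqrt (2 * \<mu> * real b) \<ge> 1" using mub by simp
  then have Pge: "sqrt 2 * \<sigma> * real b powr (5 * real m / 8) \<ge> lamB"
    unfolding P_eq using lamBpos by (simp add: mult_le_cancel_right1)
  have Q_eq: "2 * \<sigma> * (1 / sqrt \<mu>) * real b powr (5 * real m / 8) = 2 * lam0"
    unfolding lam0_def by simp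
  have B3': "4 * \<mu> * (3 * \<mu> + 1 + real L + 2 * lam0) \<le> B"
    using B3 unfolding Q_eq Lr B_def .
  have muQ: "\<mu> * lam0 \<ge> \<mu> * lamB" using Qge mupos by simp
  have keyB: "B \<ge> 1 + 6*\<mu> + 9*\<mu>^2 + 3*\<mu>*real L + (1+6*\<mu>) * lamB"
    using B1 B3' Pge muQ unfolding B_def by (simp add: algebra_simps power2_eq_square)
  define c1 where "c1 = (1 + 6*\<mu>) * s"
  have c1pos: "c1 > 0" unfolding c1_def using spos mupos by simp
  have kB2: "B - c1 * sqrt B \<ge> 1 + 6*\<mu> + 9*\<mu>^2 + 3*\<mu>*real L"
    using keyB unfolding c1_def lamB_def by (simp add: algebra_simps)
  have ssB: "sqrt B * sqrt B = B" using Bpos by simp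
  have "1 + 6*\<mu> + 9*\<mu>^2 + 3*\<mu>*real L \<ge> 0" using mupos by simp
  then have "sqrt B * (sqrt B - c1) \<ge> 0" using kB2 ssB by (simp add: algebra_simps)
  then have sBc: "sqrt B \<ge> c1" using Bpos by (simp add: zero_le_mult_iff)
  have sab: "sqrt (real a) \<ge> sqrt B" using aB by simp
  have "(sqrt (real a) - sqrt B) * (sqrt (real a) + sqrt B - c1) \<ge> 0"
    using sab sBc real_sqrt_ge_zero[of "real a"] by (intro mult_nonneg_nonneg) linarith+
  then have "real a - c1 * sqrt (real a) \<ge> B - c1 * sqrt B"
    using Bpos by (simp add: algebra_simps power2_eq_square[symmetric])
  then have fit: "real a - 1 - lam \<ge> 3 * \<mu> * (real L + 2 + 2 * lam + 3 * \<mu>)"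
    using kB2 unfolding c1_def lam_def by (simp add: algebra_simps power2_eq_square)
  have fit0: "real a - 1 - lam \<ge> 0"
    using fit mupos Lpos lam_def spos by (smt (verit) mult_nonneg_nonneg real_sqrt_ge_zero of_nat_0_le_iff)
  define x0 where "x0 = (real a - 1 - lam) / (3*\<mu>)"
  have x0pos: "x0 \<ge> 0" unfolding x0_def using fit0 mupos by simp
  define q where "q = nat \<lfloor>x0\<rfloor>"
  have qeq: "real q = real_of_int \<lfloor>x0\<rfloor>" unfolding q_def using x0pos by simp
  have qle: "real q \<le> x0" using qeq by simp
  have qgt: "real q > x0 - 1" using qeq by linarith
  have kmu_le: "3 * real q * \<mu> \<le> real a - 1 - lam"
    using qle mupos unfolding x0_def by (simp add: le_divide_eq algebra_simps)
  have kmu_gt: "3 * real q * \<mu> > real a - 1 - lam - 3 * \<mu>"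
  proof -
    have "3 * \<mu> * (real q + 1) > 3 * \<mu> * x0" using qgt mupos by simp
    also have "3 * \<mu> * x0 = real a - 1 - lam" unfolding x0_def using mupos by simp
    finally show ?thesis by (simp add: algebra_simps)
  qed
  have "x0 \<ge> real L + 2 + 2 * lam + 3 * \<mu>"
    unfolding x0_def using fit mupos by (simp add: le_divide_eq algebra_simps)
  then have qbig: "real q > real L + 1 + 2 * lam + 3 * \<mu>" using qgt by linarith
  have "b^(m-1) > 0" using b1 by simp
  then have "a > 0" using alow by (rule less_le_trans)
  then have apos: "real a > 0" by simp
  have lampos: "lam > 0" unfolding lam_def using spos apos by simp
  have "real L \<ge> 1" using Lpos by simp
  then have "real q > 1" using qbig lampos mupos by linarith
  then have q1: "q \<ge> 1" by simp
  define k where "k = 3 * q"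
  have kmu: "real k * \<mu> \<le> real a - 1 - lam" "real k * \<mu> > real a - 1 - lam - 3 * \<mu>"
    using kmu_le kmu_gt unfolding k_def by auto
  define Ui where "Ui = \<lfloor>real k * \<mu> + lam\<rfloor>"
  define Vi where "Vi = \<lceil>real k * \<mu> - lam\<rceil>"
  have Ui_le: "Ui \<le> int a - 1"
  proof -
    have "real_of_int Ui \<le> real k * \<mu> + lam" unfolding Ui_def by simp
    also have "\<dots> \<le> real a - 1" using kmu by simp
    finally show ?thesis by linarith
  qed
  have Ui_ge: "Ui \<ge> 0" unfolding Ui_def using lampos mupos by simp
  have UV: "real_of_int Ui - real_of_int Vi \<le> 2 * lam"
    unfolding Ui_def Vi_def by (smt (verit) of_int_floor_le le_of_int_ceiling)
  have Vi_ge: "real_of_int Vi \<ge> real k * \<mu> - lam" unfolding Vi_def by simp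
  \<comment> \<open>Chebyshev\<close>
  define D where "D = (\<lambda>s. real (happyH b h s) - real k * \<mu>)"
  define Z where "Z = {s. s < b^k \<and> \<bar>D s\<bar> \<le> lam}"
  define Bad where "Bad = {s. s < b^k \<and> \<bar>D s\<bar> > lam}"
  have ZB: "{..<b^k} = Z \<union> Bad" "Z \<inter> Bad = {}" unfolding Z_def Bad_def by auto
  have finZ: "finite Z" "finite Bad" unfolding Z_def Bad_def by auto
  have cardZB: "card Z + card Bad = b^k"
    using card_Un_disjoint[OF finZ ZB(2)] ZB(1) by (metis card_lessThan)
  have "real (card Bad) * lam^2 = (\<Sum>s\<in>Bad. lam^2)" by simp
  also have "\<dots> \<le> (\<Sum>s\<in>Bad. (D s)^2)"
  proof (rule sum_mono)
    fix s assume "s \<in> Bad"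
    then have "lam \<le> \<bar>D s\<bar>" unfolding Bad_def by simp
    then have "lam^2 \<le> \<bar>D s\<bar>^2" using lampos by (intro power_mono) auto
    then show "lam^2 \<le> (D s)^2" by simp
  qed
  also have "\<dots> \<le> (\<Sum>s<b^k. (D s)^2)"
    by (rule sum_mono2) (use ZB finZ in auto)
  also have "\<dots> = real b ^ k * real k * \<sigma>^2"
    unfolding D_def mu sg by (rule moment2[OF b1 h0 h1])
  finally have badb: "real (card Bad) * lam^2 \<le> real b ^ k * real k * \<sigma>^2" .
  define eps where "eps = real k * \<sigma>^2 / lam^2"
  have cardZ: "real (card Z) \<ge> real b ^ k * (1 - eps)"
  proof -
    have "real (card Bad) \<le> real b ^ k * real k * \<sigma>^2 / lam^2"
      using badb lampos by (simp add: le_divide_eq)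
    moreover have "real (card Z) = real b ^ k - real (card Bad)"
      using cardZB by (metis add_diff_cancel_right' of_nat_add of_nat_power)
    ultimately show ?thesis unfolding eps_def by (simp add: algebra_simps)
  qed
  have lam0pos: "lam0 \<ge> 0" unfolding lam0_def using sgpos mupos by simp
  have "4*\<mu>*(3*\<mu>+1+2*lam0) \<ge> 0" using mupos lam0pos by simp
  moreover have "4*\<mu>*(3*\<mu>+1+real L+2*lam0) = 4*\<mu>*real L + 4*\<mu>*(3*\<mu>+1+2*lam0)"
    by (simp add: algebra_simps)
  ultimately have muLB: "4 * \<mu> * real L \<le> B" using B3' by linarith
  have "4 * real L \<le> 4 * real L * (\<mu> * real b)" using mub Lpos by (simp add: mult_le_cancel_left1)
  also have "\<dots> = (4*\<mu>*real L) * real b" by (simp add: algebra_simps)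
  also have "\<dots> \<le> B * real b" using muLB by (intro mult_right_mono) auto
  also have "\<dots> = real b ^ m" by (rule Bb)
  finally have "4 * real L \<le> real b ^ m" .
  moreover have "real b ^ m = real b powr (real m / 4) * real L"
    unfolding Lr pm[symmetric] by (simp add: powr_add[symmetric])
  ultimately have pm4: "real b powr (real m / 4) \<ge> 4" using Lpos by simp
  define beta where "beta = real b powr (- real m / 4)"
  have beta_eq: "beta = 1 / real b powr (real m / 4)" unfolding beta_def
    by (simp add: powr_minus_divide)
  have beta_le: "beta \<le> 1/4" unfolding beta_eq using pm4 by (auto simp: divide_le_eq)
  have beta_ge: "beta \<ge> 0" unfolding beta_eq using pm4 by auto
  have lam2: "lam^2 = \<sigma>^2 * real b powr (real m / 4) * real a / \<mu>"
  proof -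
    have "(real b powr (real m / 8))^2 = real b powr (real m / 4)"
      by (simp add: powr_add[symmetric] power2_eq_square)
    then show ?thesis unfolding lam_def s_def using mupos
      by (simp add: power_mult_distrib power_divide)
  qed
  have eps_le: "eps \<le> beta"
  proof -
    have "eps = real k * \<mu> / (real b powr (real m / 4) * real a)"
      unfolding eps_def lam2 using sgpos mupos by (simp add: field_simps)
    also have "\<dots> \<le> real a / (real b powr (real m / 4) * real a)"
      using kmu lampos apos by (intro divide_right_mono) auto
    also have "\<dots> = beta" unfolding beta_eq using apos by simp
    finally show ?thesis .
  qed
  have epsnn: "eps \<ge> 0" unfolding eps_def by simp
  have "1 - eps > 0" using eps_le beta_le by linarith
  moreover have "real b ^ k > 0" using b1 by simp
  ultimately have "real b ^ k * (1 - eps) > 0" by (simp add: zero_less_mult_iff)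
  then have "real (card Z) > 0" using cardZ by linarith
  then obtain s0 where s0: "s0 \<in> Z" by (metis card.empty card.infinite less_irrefl all_not_in_conv of_nat_0)
  have ZUV: "Vi \<le> int (happyH b h s) \<and> int (happyH b h s) \<le> Ui" if "s \<in> Z" for s
  proof -
    have "\<bar>D s\<bar> \<le> lam" using that unfolding Z_def by simp
    then have "real (happyH b h s) \<le> real k * \<mu> + lam" "real (happyH b h s) \<ge> real k * \<mu> - lam"
      unfolding D_def by auto
    then show ?thesis unfolding Ui_def Vi_def by (simp add: le_floor_iff ceiling_le_iff)
  qed
  have VU: "Vi \<le> Ui" using ZUV[OF s0] by simp
  define R where "R = nat (int L + Ui - Vi)"
  define e where "e = nat (int a - 1 - Ui)"
  have Rint: "int R = int L + Ui - Vi" using VU unfolding R_def by simp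
  have eint: "int e = int a - 1 - Ui" using Ui_le unfolding e_def by simp
  have "int R > 0" using Rint VU Lpos by linarith
  then have Rpos: "R > 0" by simp
  have "real R = real L + real_of_int Ui - real_of_int Vi"
    using Rint by (metis of_int_add of_int_diff of_int_of_nat_eq)
  then have Rle: "real R \<le> real L + 2 * lam" using UV by linarith
  have "real_of_int (int L + int a - Vi) < real_of_int (int q)"
    using Vi_ge kmu qbig by simp
  then have "int L + int a - Vi < int q" by (simp only: of_int_less_iff)
  then have "int (R + e + 1) \<le> int q" using Rint eint by simp
  then have Req: "R + e + 1 \<le> q" by simp
  define t where "t j = (b^(q-1-R) + ones b e) * b^R + ones b j" for j
  have tP: "happyH b h (t j) = 1 + e + j \<and> b^(q-1) \<le> t j \<and> t j + 1 \<le> b^q" if "j \<le> R" for j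
    using t_props[OF b1 h0 h1 that Req] unfolding t_def by auto
  define I where "I j = {t j * b^k .. t j * b^k + b^k - 1}" for j
  define n where "n = 4*q"
  have bk1: "b^k \<ge> 1" using b1 by simp
  have cardI: "card (I j) = b^k" for j unfolding I_def using bk1 by simp
  have nk: "n - 1 = (q - 1) + k" unfolding n_def k_def using q1 by simp
  have nk2: "n = q + k" unfolding n_def k_def by simp
  have strictI: "strict_interval b n (I j)" if "j \<le> R" for j
  proof -
    have "b^(n-1) = b^(q-1) * b^k" unfolding nk by (simp add: power_add)
    also have "\<dots> \<le> t j * b^k" using tP[OF that] by (intro mult_le_mono1) auto
    finally have lo: "b^(n-1) \<le> t j * b^k" .
    have "t j * b^k + b^k = (t j + 1) * b^k" by simp
    also have "\<dots> \<le> b^q * b^k" using tP[OF that] by (intro mult_le_mono1) auto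
    also have "\<dots> = b^n" unfolding nk2 by (simp add: power_add)
    finally have hi: "t j * b^k + b^k \<le> b^n" .
    have sub: "I j \<subseteq> {b^(n-1)..b^n - 1}" unfolding I_def using lo hi bk1 by auto
    have "real (card (I j)) = real b ^ k" unfolding cardI by simp
    also have "\<dots> = real b powr (real k)" using bpos by (simp add: powr_realpow)
    also have "real k = 3 * real n / 4" unfolding n_def k_def by simp
    finally have "real (card (I j)) = real b powr (3 * real n / 4)" .
    then show ?thesis unfolding strict_interval_def using sub I_def by blast
  qed
  define G where "G = {y \<in> J. typeC b h C y}"
  define S where "S j = {s. s < b^k \<and> 1 + e + j + happyH b h s \<in> G}" for j
  define cnt where "cnt j = card {x \<in> I j. typeC b h C x}" for j
  have cntge: "card (S j) \<le> cnt j" if "j \<le> R" for j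
    unfolding cnt_def
  proof (rule card_inj_on_le[of "\<lambda>s. t j * b^k + s"])
    show "inj_on (\<lambda>s. t j * b^k + s) (S j)" by (simp add: inj_on_def)
    show "finite {x \<in> I j. typeC b h C x}" unfolding I_def by simp
    show "(\<lambda>s. t j * b^k + s) ` S j \<subseteq> {x \<in> I j. typeC b h C x}"
    proof safe
      fix s assume sS: "s \<in> S j"
      then have sk: "s < b^k" unfolding S_def by simp
      then show "t j * b^k + s \<in> I j" unfolding I_def by simp
      have "happyH b h (t j * b^k + s) = happyH b h (t j) + happyH b h s"
        by (rule H_concat[of b h s k "t j", OF b1 h0 sk])
      also have "\<dots> = 1 + e + j + happyH b h s" using tP[OF that] by simp
      finally have "happyH b h (t j * b^k + s) \<in> G" using sS unfolding S_def by simp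
      then have "typeC b h C (happyH b h (t j * b^k + s))" unfolding G_def by simp
      then show "typeC b h C (t j * b^k + s)" by (rule typeC_H)
    qed
  qed
  have finS: "finite (S j)" for j unfolding S_def by simp
  have sumS: "(\<Sum>j<R. card (S j)) = card (SIGMA j:{..<R}. S j)"
    by (subst card_SigmaI) (auto simp: finS)
  have finG: "finite G" unfolding G_def Jac by simp
  have GZ: "card G * card Z \<le> card (SIGMA j:{..<R}. S j)"
  proof -
    have "card (G \<times> Z) \<le> card (SIGMA j:{..<R}. S j)"
    proof (rule card_inj_on_le[of "\<lambda>(y,s). (y - (1 + e + happyH b h s), s)"])
      show "finite (SIGMA j:{..<R}. S j)" by (auto simp: finS)
      show "inj_on (\<lambda>(y,s). (y - (1 + e + happyH b h s), s)) (G \<times> Z)"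
      proof (rule inj_onI)
        fix p p' assume pG: "p \<in> G \<times> Z" and pG': "p' \<in> G \<times> Z"
          and eq0: "(\<lambda>(y,s). (y - (1 + e + happyH b h s), s)) p = (\<lambda>(y,s). (y - (1 + e + happyH b h s), s)) p'"
        obtain y s where pp: "p = (y,s)" by fastforce
        obtain y' s' where pp': "p' = (y',s')" by fastforce
        have "y \<in> G" "s \<in> Z" "y' \<in> G" using pG pG' pp pp' by auto
        have eq: "y - (1 + e + happyH b h s) = y' - (1 + e + happyH b h s)" "s' = s" using eq0 pp pp' by auto
        have "int (happyH b h s) \<le> Ui" using ZUV[OF \<open>s \<in> Z\<close>] by simp
        moreover have "a \<le> y" "a \<le> y'" using \<open>y \<in> G\<close> \<open>y' \<in> G\<close> unfolding G_def Jac by auto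
        ultimately have "1 + e + happyH b h s \<le> y" "1 + e + happyH b h s \<le> y'" using eint by linarith+
        then have "y = y'" using eq by simp
        then show "p = p'" using pp pp' eq by simp
      qed
      show "(\<lambda>(y,s). (y - (1 + e + happyH b h s), s)) ` (G \<times> Z) \<subseteq> (SIGMA j:{..<R}. S j)"
      proof (rule image_subsetI)
        fix p assume "p \<in> G \<times> Z"
        then obtain y s where pp: "p = (y,s)" and yG: "y \<in> G" and sZ: "s \<in> Z" by blast
        have HU: "Vi \<le> int (happyH b h s)" "int (happyH b h s) \<le> Ui" using ZUV[OF sZ] by auto
        have ay: "a \<le> y" "y \<le> c" using yG unfolding G_def Jac by auto
        have le: "1 + e + happyH b h s \<le> y" using HU ay eint by linarith
        have "int (y - (1 + e + happyH b h s)) = int y - 1 - int e - int (happyH b h s)" using le by simp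
        also have "\<dots> < int R" using HU ay eint Rint cL Lpos by linarith
        finally have jR: "y - (1 + e + happyH b h s) < R" by simp
        have "s < b^k" using sZ unfolding Z_def by simp
        moreover have "1 + e + (y - (1 + e + happyH b h s)) + happyH b h s = y" using le by simp
        ultimately have "s \<in> S (y - (1 + e + happyH b h s))" unfolding S_def using yG by simp
        then show "(\<lambda>(y,s). (y - (1 + e + happyH b h s), s)) p \<in> (SIGMA j:{..<R}. S j)" using jR pp by simp
      qed
    qed
    then show ?thesis by (simp add: card_cartesian_product)
  qed
  have sumcnt: "card G * card Z \<le> (\<Sum>j<R. cnt j)"
    using GZ sumS sum_mono[of "{..<R}" "\<lambda>j. card (S j)" cnt] cntge by fastforce
  obtain j where jR: "j < R" and jcnt: "card G * card Z \<le> R * cnt j"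
  proof (rule ccontr)
    note th = that
    assume nt: "\<not> thesis"
    have lt: "R * cnt j < card G * card Z" if jr: "j < R" for j
      using th[OF jr] nt not_le by blast
    have "(\<Sum>j<R. R * cnt j) < (\<Sum>j<R. card G * card Z)"
      using Rpos by (intro sum_strict_mono) (auto intro: lt)
    also have "\<dots> = R * (card G * card Z)" by simp
    also have "\<dots> \<le> R * (\<Sum>j<R. cnt j)" using sumcnt by simp
    also have "\<dots> = (\<Sum>j<R. R * cnt j)" by (simp add: sum_distrib_left)
    finally show False by simp
  qed
  have jR': "j \<le> R" using jR by simp
  define E1 where "E1 = exp (- 2 * beta)"
  define E2 where "E2 = exp (- (2 * lam0 / real L))"
  have Lpr: "real b powr (3 * real m / 4) > 0" using bpos by simp
  have pdiff: "real b powr (5 * real m / 8) / real b powr (3 * real m / 4) = real b powr (- real m / 8)"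
  proof -
    have "- real m / 8 = 5 * real m / 8 - 3 * real m / 4" by simp
    then show ?thesis by (simp only: powr_diff)
  qed
  have lam0L: "2 * lam0 / real L = 2 * (\<sigma> / sqrt \<mu>) * real b powr (- real m / 8)"
    unfolding lam0_def Lr pdiff[symmetric] by (simp add: field_simps)
  have expsplit: "exp (- 2 * real b powr (- real m / 4) - 2 * (\<sigma> / sqrt \<mu>) * real b powr (- real m / 8))
      = E1 * E2"
    unfolding E1_def E2_def beta_def lam0L by (simp add: exp_add[symmetric])
  have "E1 \<le> 1 - beta" unfolding E1_def using beta_ge beta_le by (intro one_minus_ge_exp) auto
  also have "\<dots> \<le> 1 - eps" using eps_le by simp
  also have "\<dots> \<le> real (card Z) / real b ^ k"
    using cardZ b1 by (simp add: le_divide_eq mult.commute)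
  finally have E1le: "E1 \<le> real (card Z) / real b ^ k" .
  have "E2 \<le> 1 / (1 + 2 * lam0 / real L)" unfolding E2_def
    using lam0pos Lpos by (intro inv_one_plus_ge_exp) simp
  also have "\<dots> = real L / (real L + 2 * lam0)" using Lpos by (simp add: field_simps)
  also have "\<dots> \<le> real L / real R"
    using Rle lamle Rpos by (intro divide_left_mono) auto
  finally have E2le: "E2 \<le> real L / real R" .
  have E1nn: "E1 \<ge> 0" "E2 \<ge> 0" unfolding E1_def E2_def by auto
  have densI: "typeC_density b h C (I j) = real (cnt j) / real b ^ k"
    unfolding typeC_density_def cnt_def cardI by simp
  have densJ: "typeC_density b h C J = real (card G) / real L"
    unfolding typeC_density_def G_def L_def by simp
  have "typeC_density b h C J * (E1 * E2)
      \<le> (real (card G) / real L) * ((real (card Z) / real b ^ k) * (real L / real R))"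
    unfolding densJ using E1le E2le E1nn
    by (intro mult_left_mono mult_mono) auto
  also have "\<dots> = real (card G * card Z) / (real b ^ k * real R)"
    using Lpos by (simp add: field_simps)
  also have "\<dots> \<le> real (R * cnt j) / (real b ^ k * real R)"
    using jcnt b1 Rpos by (intro divide_right_mono) (simp_all only: of_nat_le_iff, auto)
  also have "\<dots> = real (cnt j) / real b ^ k" using Rpos by simp
  finally have dens: "typeC_density b h C (I j) \<ge> typeC_density b h C J *
      exp (- 2 * real b powr (- real m / 4) - 2 * (\<sigma> / sqrt \<mu>) * real b powr (- real m / 8))"
    unfolding densI expsplit .
  have "real L \<ge> 2 powr (3 * real m / 4)" unfolding Lr using bpos
    by (intro powr_mono2) auto
  moreover have "2 powr (3 * real m / 4) = exp (3 * real m / 4 * ln 2)" by (simp add: powr_def)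
  moreover have "exp (3 * real m / 4 * ln 2) \<ge> 1 + 3 * real m / 4 * ln 2" by (rule exp_ge_add_one_self)
  moreover have "3 * real m / 4 * ln 2 \<ge> 3 * real m / 4 * (2/3)"
    using ln2_ge_two_thirds by (intro mult_left_mono) auto
  ultimately have "real L \<ge> 1 + real m / 2" by linarith
  then have "real q > 1 + real m / 2" using qbig lampos mupos by linarith
  then have mn: "2 * m \<le> n" unfolding n_def by linarith
  show ?thesis using mn strictI[OF jR'] dens by blast
qed



lemma powr_grow:
  fixes b :: real and c :: real
  assumes "b \<ge> 1" "0 \<le> c" "c \<le> 1" "m \<le> m'"
  shows "b powr (c * real m') \<le> b powr (c * real m) * b ^ (m' - m)"
proof -
  define d where "d = m' - m"
  have md: "m' = m + d" unfolding d_def using assms by simp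
  have "c * real m' = c * real m + c * real d" unfolding md by (simp add: distrib_left)
  then have "b powr (c * real m') = b powr (c * real m) * b powr (c * real d)"
    by (simp only: powr_add)
  note pe = this
  have "c * real d \<le> 1 * real d" using assms by (intro mult_right_mono) auto
  then have "b powr (c * real d) \<le> b powr (real d)"
    using assms by (intro powr_mono) auto
  also
  have "\<dots> = b ^ d" using assms by (simp add: powr_realpow)
  finally have "b powr (c * real d) \<le> b ^ d" .
  then show ?thesis unfolding pe d_def[symmetric] by (simp add: mult_left_mono)
qed

lemma B_mono:
  fixes b :: nat and \<mu> \<sigma> :: real
  assumes b1: "b > 1" and mupos: "\<mu> > 0" and sgpos: "\<sigma> \<ge> 0" and m1: "m \<ge> 1" and mm: "m \<le> m'"
    and B1: "4 * (1 + 3 * \<mu> + sqrt 2 * \<sigma> * real b powr (5 * real m / 8)) \<le> real b ^ (m - 1)"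
    and B3: "4 * \<mu> * (3 * \<mu> + 1 + real b powr (3 * real m / 4)
                 + 2 * \<sigma> * (1 / sqrt \<mu>) * real b powr (5 * real m / 8)) \<le> real b ^ (m - 1)"
  shows "4 * (1 + 3 * \<mu> + sqrt 2 * \<sigma> * real b powr (5 * real m' / 8)) \<le> real b ^ (m' - 1)"
    and "4 * \<mu> * (3 * \<mu> + 1 + real b powr (3 * real m' / 4)
                 + 2 * \<sigma> * (1 / sqrt \<mu>) * real b powr (5 * real m' / 8)) \<le> real b ^ (m' - 1)"
proof -
  define F where "F = real b ^ (m' - m)"
  have F1: "F \<ge> 1" unfolding F_def using b1 by simp
  have bb: "real b \<ge> 1" using b1 by simp
  have p5: "real b powr (5 * real m' / 8) \<le> real b powr (5 * real m / 8) * F"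
    using powr_grow[OF bb, of "5/8" m m'] mm unfolding F_def by simp
  have p3: "real b powr (3 * real m' / 4) \<le> real b powr (3 * real m / 4) * F"
    using powr_grow[OF bb, of "3/4" m m'] mm unfolding F_def by simp
  have bm: "real b ^ (m' - 1) = real b ^ (m - 1) * F"
    unfolding F_def using m1 mm by (simp add: power_add[symmetric])
  have c1: "sqrt 2 * \<sigma> \<ge> 0" "2 * \<sigma> * (1 / sqrt \<mu>) \<ge> 0" using sgpos mupos by auto
  have "4 * (1 + 3 * \<mu> + sqrt 2 * \<sigma> * real b powr (5 * real m' / 8))
      \<le> 4 * (1 + 3 * \<mu> + sqrt 2 * \<sigma> * real b powr (5 * real m / 8)) * F"
  proof -
    have "sqrt 2 * \<sigma> * real b powr (5 * real m' / 8) \<le> sqrt 2 * \<sigma> * (real b powr (5 * real m / 8) * F)"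
      using p5 c1 by (intro mult_left_mono) auto
    note ha = this
    have "1 + 3 * \<mu> \<le> (1 + 3 * \<mu>) * F" using F1 mupos by (simp add: mult_le_cancel_left1)
    note hh = ha this
    have "4 * (1 + 3 * \<mu> + sqrt 2 * \<sigma> * real b powr (5 * real m' / 8))
       = 4 * (1 + 3 * \<mu>) + 4 * (sqrt 2 * \<sigma> * real b powr (5 * real m' / 8))"
      by (simp add: algebra_simps)
    also have "\<dots> \<le> 4 * ((1 + 3 * \<mu>) * F) + 4 * (sqrt 2 * \<sigma> * (real b powr (5 * real m / 8) * F))"
      using hh by (intro add_mono) auto
    also have "\<dots> = 4 * (1 + 3 * \<mu> + sqrt 2 * \<sigma> * real b powr (5 * real m / 8)) * F"
      by (simp add: algebra_simps)
    finally show ?thesis .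
  qed
  also have "\<dots> \<le> real b ^ (m - 1) * F" using B1 F1 by (intro mult_right_mono) auto
  finally show "4 * (1 + 3 * \<mu> + sqrt 2 * \<sigma> * real b powr (5 * real m' / 8)) \<le> real b ^ (m' - 1)"
    unfolding bm .
  have "4 * \<mu> * (3 * \<mu> + 1 + real b powr (3 * real m' / 4)
                 + 2 * \<sigma> * (1 / sqrt \<mu>) * real b powr (5 * real m' / 8))
     \<le> 4 * \<mu> * (3 * \<mu> + 1 + real b powr (3 * real m / 4)
                 + 2 * \<sigma> * (1 / sqrt \<mu>) * real b powr (5 * real m / 8)) * F"
  proof -
    have "2 * \<sigma> * (1 / sqrt \<mu>) * real b powr (5 * real m' / 8) \<le> 2 * \<sigma> * (1 / sqrt \<mu>) * (real b powr (5 * real m / 8) * F)"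
      using p5 c1 by (intro mult_left_mono) auto
    note ha = this
    have "3 * \<mu> + 1 \<le> (3 * \<mu> + 1) * F" using F1 mupos by (simp add: mult_le_cancel_left1)
    note hh = ha this
    have "3 * \<mu> + 1 + real b powr (3 * real m' / 4)
                 + 2 * \<sigma> * (1 / sqrt \<mu>) * real b powr (5 * real m' / 8)
        \<le> (3 * \<mu> + 1) * F + real b powr (3 * real m / 4) * F
           + 2 * \<sigma> * (1 / sqrt \<mu>) * (real b powr (5 * real m / 8) * F)"
      using hh p3 by (intro add_mono) auto
    also have "\<dots> = (3 * \<mu> + 1 + real b powr (3 * real m / 4)
                 + 2 * \<sigma> * (1 / sqrt \<mu>) * real b powr (5 * real m / 8)) * F"
      by (simp add: algebra_simps)
    finally have "3 * \<mu> + 1 + real b powr (3 * real m' / 4)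
                 + 2 * \<sigma> * (1 / sqrt \<mu>) * real b powr (5 * real m' / 8)
        \<le> (3 * \<mu> + 1 + real b powr (3 * real m / 4)
                 + 2 * \<sigma> * (1 / sqrt \<mu>) * real b powr (5 * real m / 8)) * F" .
    then show ?thesis using mupos by (simp add: mult.assoc mult_left_mono)
  qed
  also have "\<dots> \<le> real b ^ (m - 1) * F" using B3 F1 by (intro mult_right_mono) auto
  finally show "4 * \<mu> * (3 * \<mu> + 1 + real b powr (3 * real m' / 4)
                 + 2 * \<sigma> * (1 / sqrt \<mu>) * real b powr (5 * real m' / 8)) \<le> real b ^ (m' - 1)"
    unfolding bm .
qed

lemma Tstep:
  fixes b :: nat and \<alpha> :: real
  assumes b1: "b > 1" and al: "\<alpha> > 0" and n1: "n1 > 0" and mm: "m + n1 \<le> m'"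
  shows "real b powr (- real m / \<alpha>) + real b powr (- real m' / \<alpha>) / (1 - real b powr (- real n1 / \<alpha>))
      \<le> real b powr (- real m / \<alpha>) / (1 - real b powr (- real n1 / \<alpha>))"
proof -
  define r where "r = real b powr (- real n1 / \<alpha>)"
  define x where "x = real b powr (- real m / \<alpha>)"
  define y where "y = real b powr (- real m' / \<alpha>)"
  have bb: "real b > 1" using b1 by simp
  have r1: "r < 1" unfolding r_def using bb al n1
    by (intro powr_less_one) (auto simp: divide_neg_pos)
  have r0: "r > 0" unfolding r_def using bb by simp
  have "real m + real n1 \<le> real m'" using mm by simp
  then have "(real m + real n1) / \<alpha> \<le> real m' / \<alpha>" using al by (intro divide_right_mono) auto
  then have ex: "- real m' / \<alpha> \<le> - real m / \<alpha> + - real n1 / \<alpha>" by (simp add: add_divide_distrib)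
  have "y \<le> real b powr (- real m / \<alpha> + - real n1 / \<alpha>)" unfolding y_def
    using bb ex by (intro powr_mono) auto
  also have "\<dots> = x * r" unfolding x_def r_def by (rule powr_add)
  finally have yx: "y \<le> x * r" .
  have x0: "x \<ge> 0" unfolding x_def by simp
  have "x + y / (1 - r) \<le> x + x * r / (1 - r)" using yx r1 by (simp add: divide_right_mono)
  also have "\<dots> = x / (1 - r)" using r1 by (simp add: field_simps)
  finally show ?thesis unfolding x_def y_def r_def .
qed

lemma Tval:
  fixes b :: nat and \<alpha> :: real
  assumes b1: "b > 1" and al: "\<alpha> > 0" and n1: "n1 > 0"
  shows "real b powr (- real n1 / \<alpha>) / (1 - real b powr (- real n1 / \<alpha>)) = 1 / (real b powr (real n1 / \<alpha>) - 1)"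
proof -
  have bb: "real b > 1" using b1 by simp
  define P where "P = real b powr (real n1 / \<alpha>)"
  have P1: "P > 1" unfolding P_def using bb al n1 by (intro gr_one_powr) auto
  have e: "real b powr (- real n1 / \<alpha>) = 1 / P" unfolding P_def
    by (simp add: powr_minus_divide[symmetric])
  have "real b powr (- real n1 / \<alpha>) / (1 - real b powr (- real n1 / \<alpha>)) = (1/P) / (1 - 1/P)"
    by (simp only: e)
  also have "\<dots> = 1 / (P - 1)" using P1 by (simp add: field_simps)
  finally show ?thesis unfolding P_def .
qed



theorem theorem3p5:
  fixes b n1 :: nat and h :: "nat \<Rightarrow> nat" and C I1 :: "nat set"
  defines "\<mu> \<equiv> digit_mean b h" and "\<sigma> \<equiv> digit_sd b h"
  assumes happy: "gen_happy_digits b h"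
    and n1_pos: "n1 > 0"
    and B1: "4 * (1 + 3 * \<mu> + sqrt 2 * \<sigma> * real b powr (5 * real n1 / 8)) \<le> real b ^ (n1 - 1)"
    and B2: "sqrt (3 * \<mu> * real b) * \<sigma> \<le> real b powr (3 * real n1 / 8)"
    and B3: "4 * \<mu> * (3 * \<mu> + 1 + real b powr (3 * real n1 / 4)
                 + 2 * \<sigma> * (1 / sqrt \<mu>) * real b powr (5 * real n1 / 8)) \<le> real b ^ (n1 - 1)"
    and I1: "strict_interval b n1 I1"
  shows "\<forall>N::nat. \<exists>n>N. \<exists>I. strict_interval b n I \<and>
           typeC_density b h C I \<ge> typeC_density b h C I1 *
             exp (- 2 / (real b powr (real n1 / 4) - 1)
                  - 4 * \<sigma> / (sqrt \<mu> * (real b powr (real n1 / 8) - 1)))"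
proof -
  have b1: "b > 1" and h0: "h 0 = 0" and h1: "h 1 = 1"
    using happy unfolding gen_happy_digits_def by auto
  have mueq: "\<mu> = digit_mean b h" and sgeq: "\<sigma> = digit_sd b h" unfolding \<mu>_def \<sigma>_def by simp_all
  note F = digit_facts[OF b1 h0 h1]
  have mupos: "\<mu> > 0" and sgpos: "\<sigma> > 0" using F mueq sgeq by auto
  have bb: "real b > 1" using b1 by simp
  define d1 where "d1 = typeC_density b h C I1"
  have d1nn: "d1 \<ge> 0" unfolding d1_def typeC_density_def by simp
  define cc where "cc = \<sigma> / sqrt \<mu>"
  have ccnn: "cc \<ge> 0" unfolding cc_def using sgpos mupos by simp
  define r4 where "r4 = real b powr (- real n1 / 4)"
  define r8 where "r8 = real b powr (- real n1 / 8)"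
  have r4l: "r4 < 1" unfolding r4_def using bb n1_pos
    by (intro powr_less_one) (auto simp: divide_neg_pos)
  have r8l: "r8 < 1" unfolding r8_def using bb n1_pos
    by (intro powr_less_one) (auto simp: divide_neg_pos)
  define S4 where "S4 = (\<lambda>x::nat. real b powr (- real x / 4) / (1 - r4))"
  define S8 where "S8 = (\<lambda>x::nat. real b powr (- real x / 8) / (1 - r8))"
  have S4nn: "S4 x \<ge> 0" for x unfolding S4_def using r4l by simp
  have S8nn: "S8 x \<ge> 0" for x unfolding S8_def using r8l by simp
  have inv: "\<exists>m I. n1 + i \<le> m \<and> strict_interval b m I \<and>
      typeC_density b h C I \<ge> d1 * exp (- 2 * (S4 n1 - S4 m) - 2 * cc * (S8 n1 - S8 m))" for i
  proof (induction i)
    case 0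
    show ?case by (intro exI[of _ n1] exI[of _ I1]) (simp add: I1 d1_def)
  next
    case (Suc i)
    then obtain m I where mI: "n1 + i \<le> m" "strict_interval b m I"
      and dI: "typeC_density b h C I \<ge> d1 * exp (- 2 * (S4 n1 - S4 m) - 2 * cc * (S8 n1 - S8 m))"
      by blast
    have mn1: "n1 \<le> m" "m > 0" using mI n1_pos by auto
    have n1ge: "1 \<le> n1" using n1_pos by simp
    note Bm = B_mono[OF b1 mupos less_imp_le[OF sgpos] n1ge mn1(1) B1 B3]
    obtain m' I' where m': "2 * m \<le> m'" "strict_interval b m' I'"
      and dI': "typeC_density b h C I' \<ge> typeC_density b h C I *
        exp (- 2 * real b powr (- real m / 4) - 2 * (\<sigma> / sqrt \<mu>) * real b powr (- real m / 8))"
      using step[where C=C, OF b1 h0 h1 mn1(2) mueq sgeq Bm(1) Bm(2) mI(2)] by blast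
    have mm: "m + n1 \<le> m'" using m' mn1 by simp
    have T4: "real b powr (- real m / 4) + S4 m' \<le> S4 m"
      unfolding S4_def r4_def using Tstep[OF b1 _ n1_pos mm, of 4] by simp
    have T8: "real b powr (- real m / 8) + S8 m' \<le> S8 m"
      unfolding S8_def r8_def using Tstep[OF b1 _ n1_pos mm, of 8] by simp
    have T8c: "cc * (real b powr (- real m / 8) + S8 m') \<le> cc * S8 m"
      using T8 ccnn by (rule mult_left_mono)
    define X where "X = - 2 * (S4 n1 - S4 m) - 2 * cc * (S8 n1 - S8 m)"
    define Y where "Y = - 2 * real b powr (- real m / 4) - 2 * cc * real b powr (- real m / 8)"
    have XY: "- 2 * (S4 n1 - S4 m') - 2 * cc * (S8 n1 - S8 m') \<le> X + Y"
      unfolding X_def Y_def using T4 T8c by (simp add: algebra_simps)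
    have "d1 * exp (- 2 * (S4 n1 - S4 m') - 2 * cc * (S8 n1 - S8 m')) \<le> d1 * exp (X + Y)"
      using XY d1nn by (intro mult_left_mono) auto
    also have "\<dots> = d1 * exp X * exp Y" by (simp add: exp_add)
    also have "\<dots> \<le> typeC_density b h C I * exp Y"
      using dI unfolding X_def by (intro mult_right_mono) auto
    also have "\<dots> \<le> typeC_density b h C I'" using dI' unfolding Y_def cc_def by simp
    finally have "typeC_density b h C I' \<ge> d1 * exp (- 2 * (S4 n1 - S4 m') - 2 * cc * (S8 n1 - S8 m'))" .
    moreover have "n1 + Suc i \<le> m'" using mI m' n1_pos by simp
    ultimately show ?case using m' by blast
  qed
  show ?thesis
  proof
    fix N :: nat
    obtain m I where mI: "n1 + N \<le> m" "strict_interval b m I"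
      and dI: "typeC_density b h C I \<ge> d1 * exp (- 2 * (S4 n1 - S4 m) - 2 * cc * (S8 n1 - S8 m))"
      using inv[of N] by blast
    have mN: "m > N" using mI n1_pos by simp
    have S4v: "S4 n1 = 1 / (real b powr (real n1 / 4) - 1)"
      unfolding S4_def r4_def using Tval[OF b1 _ n1_pos, of 4] by simp
    have S8v: "S8 n1 = 1 / (real b powr (real n1 / 8) - 1)"
      unfolding S8_def r8_def using Tval[OF b1 _ n1_pos, of 8] by simp
    have P8: "real b powr (real n1 / 8) > 1" using bb n1_pos by (intro gr_one_powr) auto
    have e8: "4 * \<sigma> / (sqrt \<mu> * (real b powr (real n1 / 8) - 1)) = 4 * cc * S8 n1"
      unfolding S8v cc_def using P8 mupos by (simp add: field_simps)
    have "cc * S8 n1 \<ge> 0" "cc * S8 m \<ge> 0" using ccnn S8nn by auto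
    then have ex: "- 2 / (real b powr (real n1 / 4) - 1)
                  - 4 * \<sigma> / (sqrt \<mu> * (real b powr (real n1 / 8) - 1))
           \<le> - 2 * (S4 n1 - S4 m) - 2 * cc * (S8 n1 - S8 m)"
      unfolding e8 using S4nn[of m] by (simp add: algebra_simps S4v)
    have "typeC_density b h C I1 * exp (- 2 / (real b powr (real n1 / 4) - 1)
                  - 4 * \<sigma> / (sqrt \<mu> * (real b powr (real n1 / 8) - 1)))
       \<le> d1 * exp (- 2 * (S4 n1 - S4 m) - 2 * cc * (S8 n1 - S8 m))"
      unfolding d1_def[symmetric] using ex d1nn by (intro mult_left_mono) auto
    also have "\<dots> \<le> typeC_density b h C I" by (rule dI)
    finally show "\<exists>n>N. \<exists>I. strict_interval b n I \<and>
           typeC_density b h C I \<ge> typeC_density b h C I1 *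
             exp (- 2 / (real b powr (real n1 / 4) - 1)
                  - 4 * \<sigma> / (sqrt \<mu> * (real b powr (real n1 / 8) - 1)))"
      using mN mI(2) by blast
  qed
qed


end
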